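(* Let $T\ge 1$ and $d\ge 1$ be integers, let $\gamma>0$ and $\beta>0$, and for each task $t\in\{1,\dots,T\}$ let $(x_{t1},y_{t1}),\dots,(x_{tm_t},y_{tm_t})\in\mathbb{R}^d\times\mathbb{R}$ be given data. Let $l:\mathbb{R}\times\mathbb{R}\to\mathbb{R}$ be a loss function that is convex in its second argument. Consider the (non-convex) problem $$\text{(P)}\qquad \min_{A\in\mathbb{R}^{d\times T},\,a_0\in\mathbb{R}^d,\,U\in O^d}\ \sum_{t=1}^{T}\sum_{i=1}^{m_t} l\big(y_{ti},\langle a_t+a_0,U^Tx_{ti}\rangle\big)+\frac{\gamma}{T}\|A\|_{2,1}^2+\beta\|a_0\|_2^2,$$ where $A=[a_1,\dots,a_T]$, and the problem $$\text{(C)}\qquad \min_{W\in\mathbb{R}^{d\times T},\,w_0\in\mathbb{R}^d,\,D}\ \sum_{t=1}^{T}\sum_{i=1}^{m_t} l\big(y_{ti},\langle w_t+w_0,x_{ti}\rangle\big)+\frac{\gamma}{T}\sum_{t=1}^T\langle w_t,D^+w_t\rangle+\beta\langle w_0,w_0\rangle$$ subject to $\operatorname{trace}(D)\le 1$, $\operatorname{range}(W)\subseteq\operatorname{range}(D)$, $D\in S_+^d$, where $W=[w_1,\dots,w_T]$. Then (C) is a convex optimization problem equivalent to (P) in the following sense. If $(\hat W,\hat w_0,\hat D)$ is an optimal solution of (C) and the columns of $\hat U$ form an orthonormal basis of eigenvectors of $\hat D$, then $(\hat A,\hat a_0,\hat U)$ with $\hat A=\hat U^T\hat W$, $\hat a_0=\hat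 U^T\hat w_0$ is an optimal solution of (P). Conversely, if $(\hat A,\hat a_0,\hat U)$ is an optimal solution of (P), then $\hat W=\hat U\hat A$, $\hat w_0=\hat U\hat a_0$, $\hat D=\hat U\,\mathrm{Diag}\!\left(\frac{\|\hat a^i\|_2}{\|\hat A\|_{2,1}}\right)_{i=1}^d\hat U^T$ is an optimal solution of (C), where $\hat a^i$ denotes the $i$-th row of $\hat A$.
   Context: $O^d$ denotes the set of $d\times d$ orthogonal matrices ($U^TU=I$). For a matrix $A\in\mathbb{R}^{d\times T}$ with rows $a^1,\dots,a^d$, $\|A\|_{2,1}=\sum_{i=1}^d\|a^i\|_2$. $S_+^d$ is the set of $d\times d$ symmetric positive semidefinite matrices; $D^+$ is the Moore–Penrose pseudoinverse of $D$; $\operatorname{range}(W)=\{Wz: z\in\mathbb{R}^T\}$; $\mathrm{Diag}(v_i)_{i=1}^d$ is the diagonal matrix with diagonal entries $v_1,\dots,v_d$. *)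

theory Defs
  imports "HOL-Analysis.Analysis"
begin

definition pinv :: "real^'n^'n \<Rightarrow> real^'n^'n" where
  "pinv D = (THE X. D ** X ** D = D \<and> X ** D ** X = X \<and>
                    transpose (D ** X) = D ** X \<and> transpose (X ** D) = X ** D)"

definition psd :: "real^'n^'n \<Rightarrow> bool" where
  "psd D \<longleftrightarrow> transpose D = D \<and> (\<forall>v. 0 \<le> v \<bullet> (D *v v))"

definition mrange :: "real^'m^'n \<Rightarrow> (real^'n) set" where
  "mrange M = {M *v z | z. True}"

definition norm21 :: "real^'t^'d \<Rightarrow> real" where
  "norm21 A = (\<Sum>i\<in>UNIV. norm (row i A))"

definition Diag :: "('d \<Rightarrow> real) \<Rightarrow> real^'d^'d" where
  "Diag v = (\<chi> i j. if i = j then v i else 0)"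

(* objective of (P); tasks indexed by type 't, data x t i, y t i for i < m t *)
definition objP ::
  "(real \<Rightarrow> real \<Rightarrow> real) \<Rightarrow> real \<Rightarrow> real \<Rightarrow> ('t::finite \<Rightarrow> nat) \<Rightarrow>
   ('t \<Rightarrow> nat \<Rightarrow> real^'d) \<Rightarrow> ('t \<Rightarrow> nat \<Rightarrow> real) \<Rightarrow>
   real^'t^'d \<Rightarrow> real^'d \<Rightarrow> real^'d^'d \<Rightarrow> real" where
  "objP l \<gamma> \<beta> m x y A a0 U =
     (\<Sum>t\<in>UNIV. \<Sum>i<m t. l (y t i) ((column t A + a0) \<bullet> (transpose U *v x t i)))
     + \<gamma> / real CARD('t) * (norm21 A)^2 + \<beta> * (norm a0)^2"

definition feasP :: "((real^'t^'d) \<times> (real^'d) \<times> (real^'d^'d)) set" where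
  "feasP = {(A, a0, U). orthogonal_matrix U}"

definition optP where
  "optP l \<gamma> \<beta> m x y A a0 U \<longleftrightarrow> (A, a0, U) \<in> feasP \<and>
     (\<forall>(A', a0', U') \<in> feasP. objP l \<gamma> \<beta> m x y A a0 U \<le> objP l \<gamma> \<beta> m x y A' a0' U')"

definition objC ::
  "(real \<Rightarrow> real \<Rightarrow> real) \<Rightarrow> real \<Rightarrow> real \<Rightarrow> ('t::finite \<Rightarrow> nat) \<Rightarrow>
   ('t \<Rightarrow> nat \<Rightarrow> real^'d) \<Rightarrow> ('t \<Rightarrow> nat \<Rightarrow> real) \<Rightarrow>
   (real^'t^'d) \<times> (real^'d) \<times> (real^'d^'d) \<Rightarrow> real" where
  "objC l \<gamma> \<beta> m x y = (\<lambda>(W, w0, D).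
     (\<Sum>t\<in>UNIV. \<Sum>i<m t. l (y t i) ((column t W + w0) \<bullet> x t i))
     + \<gamma> / real CARD('t) * (\<Sum>t\<in>UNIV. column t W \<bullet> (pinv D *v column t W))
     + \<beta> * (w0 \<bullet> w0))"

definition feasC :: "((real^'t^'d) \<times> (real^'d) \<times> (real^'d^'d)) set" where
  "feasC = {(W, w0, D). trace D \<le> 1 \<and> mrange W \<subseteq> mrange D \<and> psd D}"

definition optC where
  "optC l \<gamma> \<beta> m x y W w0 D \<longleftrightarrow> (W, w0, D) \<in> feasC \<and>
     (\<forall>p \<in> feasC. objC l \<gamma> \<beta> m x y (W, w0, D) \<le> objC l \<gamma> \<beta> m x y p)"

end

theory Submission
  imports Defs
begin


lemma inner_mv: "((M::real^'n^'m) *v a) \<bullet> b = a \<bullet> (transpose M *v b)"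
  by (metis dot_lmul_matrix vector_transpose_matrix)

lemma sym_inner: "transpose (D::real^'n^'n) = D \<Longrightarrow> a \<bullet> (D *v b) = (D *v a) \<bullet> b"
  by (metis inner_mv)

lemma quad_zero:
  fixes a c :: real
  assumes "\<And>t. 2 * t * a + t^2 * c \<le> 0"
  shows "a = 0"
proof -
  define k where "k = \<bar>c\<bar> + 1"
  have k: "k > 0" "2*k + c > 0" unfolding k_def by auto
  have "2 * (a/k) * a + (a/k)^2 * c \<le> 0" using assms .
  hence "a^2 * (2*k + c) / k^2 \<le> 0" using k by (simp add: field_simps power2_eq_square)
  hence "a^2 * (2*k + c) \<le> 0" using k by (simp add: divide_le_0_iff)
  hence "a^2 \<le> 0" using k by (simp add: mult_le_0_iff)
  thus ?thesis by simp
qed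

lemma spectral_subspace:
  fixes D :: "real^'n^'n"
  assumes sym: "transpose D = D"
  shows "subspace S \<Longrightarrow> (\<forall>x\<in>S. D *v x \<in> S) \<Longrightarrow>
    \<exists>B. B \<subseteq> S \<and> pairwise orthogonal B \<and> (\<forall>b\<in>B. norm b = 1) \<and>
        (\<forall>b\<in>B. \<exists>c. D *v b = c *s b) \<and> S \<subseteq> span B"
proof (induction "dim S" arbitrary: S rule: less_induct)
  case less
  show ?case
  proof (cases "S \<subseteq> {0}")
    case True
    then show ?thesis by (intro exI[of _ "{}"]) auto
  next
    case False
    then obtain x0 where x0: "x0 \<in> S" "x0 \<noteq> 0" by auto
    define K where "K = S \<inter> sphere 0 1"
    have "closed S" using less.prems(1) by (simp add: closed_subspace)
    hence cK: "compact K" unfolding K_def by (simp add: compact_Int_closed compact_sphere Int_commute closed_Int_compact)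
    have "x0 /\<^sub>R norm x0 \<in> K" using x0 less.prems(1) unfolding K_def
      by (auto simp: subspace_scale)
    hence neK: "K \<noteq> {}" by auto
    have contf: "continuous_on K (\<lambda>v. v \<bullet> (D *v v))"
      by (intro continuous_intros)
    obtain v where vK: "v \<in> K" and vmax: "\<And>u. u \<in> K \<Longrightarrow> u \<bullet> (D *v u) \<le> v \<bullet> (D *v v)"
      using continuous_attains_sup[OF cK neK contf] by blast
    define lam where "lam = v \<bullet> (D *v v)"
    have vS: "v \<in> S" and vn: "norm v = 1" using vK unfolding K_def by auto
    have vv: "v \<bullet> v = 1" using vn by (simp add: norm_eq_1)
    have bound: "u \<bullet> (D *v u) \<le> lam * (u \<bullet> u)" if "u \<in> S" for u
    proof (cases "u = 0")
      case True then show ?thesis by simp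
    next
      case False
      have "u /\<^sub>R norm u \<in> K" using that less.prems(1) False unfolding K_def
        by (auto simp: subspace_scale)
      hence "(u /\<^sub>R norm u) \<bullet> (D *v (u /\<^sub>R norm u)) \<le> lam" using vmax lam_def by blast
      hence "(u \<bullet> (D *v u)) / (norm u)^2 \<le> lam"
        by (simp add: matrix_vector_mult_scaleR power2_eq_square divide_inverse mult_ac)
      hence "u \<bullet> (D *v u) \<le> lam * (norm u)^2" using False by (simp add: divide_le_eq)
      thus ?thesis by (simp add: power2_norm_eq_inner)
    qed
    have orth0: "(D *v v - lam *\<^sub>R v) \<bullet> u = 0" if uS: "u \<in> S" for u
    proof -
      have "2 * t * ((D *v v - lam *\<^sub>R v) \<bullet> u) + t^2 * (u \<bullet> (D *v u) - lam * (u \<bullet> u)) \<le> 0" for t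
      proof -
        have "v + t *\<^sub>R u \<in> S" using vS uS less.prems(1) by (simp add: subspace_add subspace_scale)
        from bound[OF this]
        have "(v + t *\<^sub>R u) \<bullet> (D *v (v + t *\<^sub>R u)) \<le> lam * ((v + t *\<^sub>R u) \<bullet> (v + t *\<^sub>R u))" .
        moreover have "v \<bullet> (D *v u) = (D *v v) \<bullet> u" using sym_inner[OF sym] .
        ultimately show ?thesis using vv
          by (simp add: matrix_vector_right_distrib matrix_vector_mult_scaleR inner_add_left inner_add_right
              inner_diff_left lam_def inner_commute[of u v] inner_commute[of u "D *v v"] power2_eq_square algebra_simps)
      qed
      thus ?thesis by (rule quad_zero)
    qed
    have DvS: "D *v v \<in> S" using less.prems(2) vS by blast
    have "(D *v v - lam *\<^sub>R v) \<in> S" using DvS vS less.prems(1) by (simp add: subspace_diff subspace_scale)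
    from orth0[OF this] have eig: "D *v v = lam *\<^sub>R v" by simp
    define S' where "S' = {u \<in> S. v \<bullet> u = 0}"
    have sub': "subspace S'" using less.prems(1) unfolding S'_def subspace_def
      by (auto simp: inner_add_right)
    have inv': "\<forall>x\<in>S'. D *v x \<in> S'"
      using less.prems(2) sym_inner[OF sym, of v] eig unfolding S'_def by auto
    have "v \<notin> S'" using vv unfolding S'_def by auto
    hence "S' \<subset> S" using vS unfolding S'_def by blast
    hence "dim S' < dim S"
      proof -
      have e: "span S' = S'" "span S = S" using sub' less.prems(1) by (simp_all add: span_eq_iff)
      show ?thesis using dim_psubset[of S' S] \<open>S' \<subset> S\<close> unfolding e by blast
    qed
    from less.hyps[OF this sub' inv'] obtain B' where
      B': "B' \<subseteq> S'" "pairwise orthogonal B'" "\<forall>b\<in>B'. norm b = 1"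
          "\<forall>b\<in>B'. \<exists>c. D *v b = c *s b" "S' \<subseteq> span B'" by blast
    show ?thesis
    proof (intro exI[of _ "insert v B'"] conjI)
      show "insert v B' \<subseteq> S" using B'(1) vS unfolding S'_def by auto
      show "pairwise orthogonal (insert v B')"
        using B'(1,2) unfolding S'_def pairwise_insert
        by (auto simp: orthogonal_def inner_commute)
      show "\<forall>b\<in>insert v B'. norm b = 1" using B'(3) vn by auto
      show "\<forall>b\<in>insert v B'. \<exists>c. D *v b = c *s b" using B'(4) eig
        by (auto simp: scalar_mult_eq_scaleR)
      show "S \<subseteq> span (insert v B')"
      proof
        fix x assume xS: "x \<in> S"
        have "x - (v \<bullet> x) *\<^sub>R v \<in> S'" unfolding S'_def using xS vS less.prems(1) vv
          by (simp add: subspace_diff subspace_scale inner_diff_right)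
        hence "x - (v \<bullet> x) *\<^sub>R v \<in> span (insert v B')" using B'(5) span_mono[of B' "insert v B'"] by blast
        moreover have "(v \<bullet> x) *\<^sub>R v \<in> span (insert v B')" by (simp add: span_base span_mul)
        ultimately have "(x - (v \<bullet> x) *\<^sub>R v) + (v \<bullet> x) *\<^sub>R v \<in> span (insert v B')" by (rule span_add)
        thus "x \<in> span (insert v B')" by simp
      qed
    qed
  qed
qed

lemma spectral:
  fixes D :: "real^'n^'n"
  assumes sym: "transpose D = D"
  shows "\<exists>U c. orthogonal_matrix U \<and> (\<forall>j. D *v column j U = c j *s column j U)"
proof -
  obtain B where B: "pairwise orthogonal B" "\<forall>b\<in>B. norm b = 1"
      "\<forall>b\<in>B. \<exists>c. D *v b = c *s b" "UNIV \<subseteq> span B"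
    using spectral_subspace[OF sym, of UNIV] by auto
  have "0 \<notin> B" using B(2) by force
  hence ind: "independent B" using B(1) pairwise_orthogonal_independent by blast
  hence fin: "finite B" using finiteI_independent by blast
  have "card B = dim (UNIV :: (real^'n) set)" using basis_card_eq_dim[OF _ B(4) ind] by simp
  hence cB: "card B = CARD('n)" by simp
  then obtain f where f: "bij_betw f (UNIV::'n set) B"
    by (metis finite_class.finite_UNIV finite_same_card_bij fin)
  have fB: "f i \<in> B" for i using f by (auto simp: bij_betw_def)
  have [simp]: "\<And>i. norm (f i) = 1" using fB B(2) by blast
  have [simp]: "\<And>i j. i \<noteq> j \<Longrightarrow> orthogonal (f i) (f j)"
    using B(1) f by (auto simp: pairwise_def bij_betw_def inj_on_def)
  define U where "U = (\<chi> i j. f j $ i)"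
  have col: "column j U = f j" for j by (simp add: U_def column_def)
  have "orthogonal_matrix U" by (simp add: orthogonal_matrix_orthonormal_columns col)
  moreover have "\<forall>j. \<exists>c. D *v column j U = c *s column j U" using B(3) fB col by metis
  ultimately show ?thesis by metis
qed

lemma if0_mult[simp]: "(if P then x else 0) * (y::real) = (if P then x * y else 0)"
  "y * (if P then x else 0) = (if P then y * x else 0)" by auto

lemma Diag_mul: "Diag a ** Diag b = Diag (\<lambda>i. a i * b i)"
  by (simp add: Diag_def matrix_matrix_mult_def vec_eq_iff)

lemma transpose_Diag: "transpose (Diag a) = Diag a"
  by (simp add: Diag_def transpose_def vec_eq_iff)

lemma Diag_mv: "Diag a *v v = (\<chi> i. a i * v $ i)"
  by (simp add: Diag_def matrix_vector_mult_def vec_eq_iff)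

lemma mul_Diag_nth: "(M ** Diag a) $ i $ j = M $ i $ j * a j"
  by (simp add: Diag_def matrix_matrix_mult_def )

lemma Diag_mul_nth: "(Diag a ** M) $ i $ j = a i * M $ i $ j"
  by (simp add: Diag_def matrix_matrix_mult_def )

lemma orth_UUt: "orthogonal_matrix U \<Longrightarrow> U ** transpose U = mat 1"
  by (simp add: orthogonal_matrix_def)
lemma orth_UtU: "orthogonal_matrix U \<Longrightarrow> transpose U ** U = mat 1"
  by (simp add: orthogonal_matrix_def)

lemma conj_mul:
  assumes "orthogonal_matrix (U::real^'n^'n)"
  shows "(U ** A ** transpose U) ** (U ** B ** transpose U) = U ** (A ** B) ** transpose U"
proof -
  have "(U ** A ** transpose U) ** (U ** B ** transpose U) = U ** A ** (transpose U ** U) ** B ** transpose U"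
    by (simp add: matrix_mul_assoc)
  thus ?thesis using orth_UtU[OF assms] by (simp add: matrix_mul_assoc)
qed

lemma conj_transpose: "transpose (U ** A ** transpose U :: real^'n^'n) = U ** transpose A ** transpose U"
  by (simp add: matrix_transpose_mul matrix_mul_assoc)

lemma penrose_unique:
  fixes D X Y :: "real^'n^'n"
  assumes X1: "D ** X ** D = D" and X2: "X ** D ** X = X" and X3: "transpose (D ** X) = D ** X"
    and X4: "transpose (X ** D) = X ** D"
    and Y1: "D ** Y ** D = D" and Y2: "Y ** D ** Y = Y" and Y3: "transpose (D ** Y) = D ** Y"
    and Y4: "transpose (Y ** D) = Y ** D"
  shows "X = Y"
proof -
  have DT: "transpose D = transpose D ** (D ** Y)"
    by (metis Y1 Y3 matrix_transpose_mul matrix_mul_assoc)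
  have "X = X ** (D ** X)" using X2 by (simp add: matrix_mul_assoc)
  also have "\<dots> = X ** transpose X ** transpose D" using X3 by (metis matrix_transpose_mul matrix_mul_assoc)
  also have "\<dots> = X ** transpose X ** transpose D ** (D ** Y)" by (metis DT matrix_mul_assoc)
  also have "\<dots> = X ** transpose (D ** X) ** (D ** Y)" by (simp add: matrix_transpose_mul matrix_mul_assoc)
  also have "\<dots> = X ** D ** Y" using X2 X3 by (simp add: matrix_mul_assoc)
  finally have hX: "X = X ** D ** Y" .
  have DT2: "transpose D = (X ** D) ** transpose D"
    by (metis X1 X4 matrix_transpose_mul matrix_mul_assoc)
  have "Y = (Y ** D) ** Y" using Y2 by (simp add: matrix_mul_assoc)
  also have "\<dots> = transpose D ** transpose Y ** Y" using Y4 by (metis matrix_transpose_mul)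
  also have "\<dots> = (X ** D) ** transpose D ** transpose Y ** Y" by (metis DT2)
  also have "\<dots> = X ** D ** transpose (Y ** D) ** Y" by (simp add: matrix_transpose_mul matrix_mul_assoc)
  also have "\<dots> = X ** D ** (Y ** D ** Y)" using Y4 by (simp add: matrix_mul_assoc)
  also have "\<dots> = X ** D ** Y" using Y2 by simp
  finally have hY: "Y = X ** D ** Y" .
  show ?thesis using hX hY by simp
qed

lemma pinv_eq:
  fixes D X :: "real^'n^'n"
  assumes "D ** X ** D = D" "X ** D ** X = X" "transpose (D ** X) = D ** X" "transpose (X ** D) = X ** D"
  shows "pinv D = X"
  unfolding pinv_def
  by (rule the_equality) (use assms penrose_unique in blast)+

lemma pinv_diag:
  fixes U :: "real^'n^'n"
  assumes U: "orthogonal_matrix U"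
  shows "pinv (U ** Diag c ** transpose U) = U ** Diag (\<lambda>i. inverse (c i)) ** transpose U"
proof (rule pinv_eq)
  have "c i * inverse (c i) * c i = c i" for i by (cases "c i = 0") auto
  hence e1: "(\<lambda>i. c i * inverse (c i) * c i) = c" by (auto simp: fun_eq_iff)
  have "inverse (c i) * c i * inverse (c i) = inverse (c i)" for i by (cases "c i = 0") auto
  hence e2: "(\<lambda>i. inverse (c i) * c i * inverse (c i)) = (\<lambda>i. inverse (c i))" by (auto simp: fun_eq_iff)
  have e3: "(\<lambda>i. inverse (c i) * c i) = (\<lambda>i. c i * inverse (c i))" by (auto simp: fun_eq_iff)
  show "U ** Diag c ** transpose U ** (U ** Diag (\<lambda>i. inverse (c i)) ** transpose U) ** (U ** Diag c ** transpose U) =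
    U ** Diag c ** transpose U" by (simp add: conj_mul[OF U] Diag_mul e1)
  show "U ** Diag (\<lambda>i. inverse (c i)) ** transpose U ** (U ** Diag c ** transpose U) ** (U ** Diag (\<lambda>i. inverse (c i)) ** transpose U) =
    U ** Diag (\<lambda>i. inverse (c i)) ** transpose U" by (simp add: conj_mul[OF U] Diag_mul e2)
  show "transpose (U ** Diag c ** transpose U ** (U ** Diag (\<lambda>i. inverse (c i)) ** transpose U)) =
    U ** Diag c ** transpose U ** (U ** Diag (\<lambda>i. inverse (c i)) ** transpose U)"
    by (simp add: conj_mul[OF U] Diag_mul conj_transpose transpose_Diag)
  show "transpose (U ** Diag (\<lambda>i. inverse (c i)) ** transpose U ** (U ** Diag c ** transpose U)) =
    U ** Diag (\<lambda>i. inverse (c i)) ** transpose U ** (U ** Diag c ** transpose U)"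
    by (simp add: conj_mul[OF U] Diag_mul conj_transpose transpose_Diag)
qed



lemma column_mul: "column t ((M::real^'k^'n) ** W) = M *v column t W"
  by (simp add: column_def matrix_matrix_mult_def matrix_vector_mult_def vec_eq_iff)

lemma orth_inner: "orthogonal_matrix (U::real^'n^'n) \<Longrightarrow> (transpose U *v a) \<bullet> (transpose U *v b) = a \<bullet> b"
  by (metis inner_mv matrix_vector_mul_assoc orth_UUt matrix_vector_mul_lid transpose_transpose)

lemma orth_inner2: "orthogonal_matrix (U::real^'n^'n) \<Longrightarrow> (U *v a) \<bullet> (U *v b) = a \<bullet> b"
  by (simp add: inner_mv matrix_vector_mul_assoc orth_UtU)

lemma eig_decomp:
  fixes D U :: "real^'n^'n"
  assumes U: "orthogonal_matrix U" and e: "\<forall>j. D *v column j U = c j *s column j U"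
  shows "D = U ** Diag c ** transpose U"
proof -
  have "D ** U = U ** Diag c"
  proof -
    have "(D ** U) $ i $ j = (U ** Diag c) $ i $ j" for i j
    proof -
      have "(D ** U) $ i $ j = (D *v column j U) $ i"
        by (simp add: matrix_matrix_mult_def matrix_vector_mult_def column_def)
      also have "\<dots> = c j * U $ i $ j" using e by (simp add: column_def)
      finally show ?thesis by (simp add: mul_Diag_nth)
    qed
    thus ?thesis by (simp add: vec_eq_iff)
  qed
  hence "D ** (U ** transpose U) = U ** Diag c ** transpose U" by (simp add: matrix_mul_assoc)
  thus ?thesis using orth_UUt[OF U] by simp
qed

lemma psd_spec:
  fixes D :: "real^'n^'n"
  assumes "psd D"
  shows "\<exists>U c. orthogonal_matrix U \<and> D = U ** Diag c ** transpose U \<and> (\<forall>i. c i \<ge> 0)"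
proof -
  have sym: "transpose D = D" using assms by (simp add: psd_def)
  obtain U c where U: "orthogonal_matrix U" and e: "\<forall>j. D *v column j U = c j *s column j U"
    using spectral[OF sym] by blast
  have "c i \<ge> 0" for i
  proof -
    have "0 \<le> column i U \<bullet> (D *v column i U)" using assms by (simp add: psd_def)
    also have "\<dots> = c i * (column i U \<bullet> column i U)" using e by (simp add: scalar_mult_eq_scaleR)
    also have "\<dots> = c i" using U by (simp add: orthogonal_matrix_orthonormal_columns norm_eq_1)
    finally show ?thesis .
  qed
  thus ?thesis using eig_decomp[OF U e] U by blast
qed

lemma trace_conj:
  assumes U: "orthogonal_matrix (U::real^'n^'n)"
  shows "trace (U ** Diag c ** transpose U) = sum c UNIV"
proof -
  have "trace (U ** Diag c ** transpose U) = trace (U ** (Diag c ** transpose U))" by (simp add: matrix_mul_assoc)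
  also have "\<dots> = trace ((Diag c ** transpose U) ** U)" by (rule trace_mul_sym)
  also have "\<dots> = trace (Diag c)" using orth_UtU[OF U] by (simp add: matrix_mul_assoc[symmetric])
  also have "\<dots> = sum c UNIV" by (simp add: trace_def Diag_def)
  finally show ?thesis .
qed

lemma conj_mv:
  assumes U: "orthogonal_matrix (U::real^'n^'n)"
  shows "transpose U *v ((U ** M ** transpose U) *v z) = M *v (transpose U *v z)"
proof -
  have "transpose U ** (U ** M ** transpose U) = M ** transpose U"
    using orth_UtU[OF U] by (simp add: matrix_mul_assoc)
  thus ?thesis by (metis matrix_vector_mul_assoc)
qed

lemma pinv_psd:
  fixes D :: "real^'n^'n"
  assumes "psd D"
  shows "D ** pinv D ** D = D"
proof -
  obtain U c where U: "orthogonal_matrix U" and D: "D = U ** Diag c ** transpose U"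
    using psd_spec[OF assms] by blast
  have "c i * inverse (c i) * c i = c i" for i by (cases "c i = 0") auto
  hence e1: "(\<lambda>i. c i * inverse (c i) * c i) = c" by (auto simp: fun_eq_iff)
  show ?thesis unfolding D pinv_diag[OF U] by (simp add: conj_mul[OF U] Diag_mul e1)
qed

lemma pinv_quad:
  fixes D :: "real^'n^'n"
  assumes "psd D" "w = D *v z"
  shows "w \<bullet> (pinv D *v w) = z \<bullet> (D *v z)"
proof -
  have sym: "transpose D = D" using assms by (simp add: psd_def)
  have "w \<bullet> (pinv D *v w) = z \<bullet> (D *v (pinv D *v (D *v z)))"
    using assms(2) inner_mv[of D z] sym by simp
  also have "\<dots> = z \<bullet> ((D ** pinv D ** D) *v z)" by (metis matrix_vector_mul_assoc)
  finally show ?thesis using pinv_psd[OF assms(1)] by (simp add: matrix_mul_assoc)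
qed

lemma psd_nonneg: "psd D \<Longrightarrow> 0 \<le> u \<bullet> (D *v u)" by (simp add: psd_def)

lemma pinv_sup:
  fixes D :: "real^'n^'n"
  assumes "psd D" "w = D *v z1"
  shows "2 * (z \<bullet> w) - z \<bullet> (D *v z) \<le> w \<bullet> (pinv D *v w)"
proof -
  have sym: "transpose D = D" using assms by (simp add: psd_def)
  have s: "z1 \<bullet> (D *v z) = z \<bullet> (D *v z1)" using sym_inner[OF sym, of z1 z] by (simp add: inner_commute)
  have "0 \<le> (z - z1) \<bullet> (D *v (z - z1))" by (rule psd_nonneg[OF assms(1)])
  hence "0 \<le> z \<bullet> (D *v z) - 2 * (z \<bullet> (D *v z1)) + z1 \<bullet> (D *v z1)"
    using s by (simp add: matrix_vector_mult_diff_distrib inner_diff_left inner_diff_right)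
  thus ?thesis using pinv_quad[OF assms] assms(2) by simp
qed

lemma psd_null:
  fixes D :: "real^'n^'n"
  assumes "psd D" "u \<bullet> (D *v u) = 0"
  shows "D *v u = 0"
proof -
  have sym: "transpose D = D" using assms by (simp add: psd_def)
  have "x \<bullet> (D *v u) = 0" for x
  proof -
    have "2 * t * (- (x \<bullet> (D *v u))) + t^2 * (- (x \<bullet> (D *v x))) \<le> 0" for t
    proof -
      have "0 \<le> (u + t *\<^sub>R x) \<bullet> (D *v (u + t *\<^sub>R x))" by (rule psd_nonneg[OF assms(1)])
      moreover have "u \<bullet> (D *v x) = x \<bullet> (D *v u)" using sym_inner[OF sym, of u x] by (simp add: inner_commute)
      ultimately show ?thesis using assms(2)
        by (simp add: matrix_vector_right_distrib matrix_vector_mult_scaleR inner_add_left inner_add_right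
              power2_eq_square algebra_simps)
    qed
    from quad_zero[OF this] show ?thesis by simp
  qed
  from this[of "D *v u"] show ?thesis by simp
qed

lemma conj_mv2:
  assumes U: "orthogonal_matrix (U::real^'n^'n)"
  shows "(U ** M ** transpose U) *v (U *v y) = U *v (M *v y)"
proof -
  have "(U ** M ** transpose U) ** U = U ** M"
    using orth_UtU[OF U] by (simp add: matrix_mul_assoc[symmetric])
  thus ?thesis by (metis matrix_vector_mul_assoc)
qed

lemma eig_col:
  assumes U: "orthogonal_matrix (U::real^'n^'n)"
  shows "(U ** Diag c ** transpose U) *v column i U = c i *s column i U"
proof -
  have "(U ** Diag c ** transpose U) ** U = U ** Diag c"
    using orth_UtU[OF U] by (simp add: matrix_mul_assoc[symmetric])
  hence "(U ** Diag c ** transpose U) *v column i U = column i (U ** Diag c)"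
    by (metis column_mul)
  thus ?thesis by (simp add: column_def mul_Diag_nth vec_eq_iff mult.commute)
qed

lemma tmv_nth: "(transpose (U::real^'n^'n) *v v) $ i = column i U \<bullet> v"
  by (simp add: transpose_def matrix_vector_mult_def inner_vec_def column_def)

lemma range_char:
  fixes D :: "real^'n^'n"
  assumes "psd D" "\<And>u. D *v u = 0 \<Longrightarrow> u \<bullet> v = 0"
  shows "v \<in> mrange D"
proof -
  obtain U c where U: "orthogonal_matrix U" and D: "D = U ** Diag c ** transpose U"
    using psd_spec[OF assms(1)] by blast
  define a where "a = transpose U *v v"
  have a0: "a $ i = 0" if "c i = 0" for i
  proof -
    have "D *v column i U = 0" using eig_col[OF U, of c i] that D by simp
    hence "column i U \<bullet> v = 0" using assms(2) by blast
    thus ?thesis unfolding a_def tmv_nth .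
  qed
  have "Diag c *v (Diag (\<lambda>i. inverse (c i)) *v a) = a"
    using a0 by (auto simp: Diag_mv vec_eq_iff) (metis right_inverse)
  hence "D *v (U *v (Diag (\<lambda>i. inverse (c i)) *v a)) = U *v a"
    unfolding D conj_mv2[OF U] by simp
  also have "U *v a = v" unfolding a_def by (metis matrix_vector_mul_assoc matrix_vector_mul_lid orth_UUt[OF U])
  finally show ?thesis unfolding mrange_def by blast
qed



lemma norm_row_sq: "(norm (row i (A::real^'t^'d)))^2 = (\<Sum>t\<in>UNIV. (A $ i $ t)^2)"
proof -
  have "(norm (row i A))^2 = row i A \<bullet> row i A" by (rule power2_norm_eq_inner)
  thus ?thesis by (simp add: inner_vec_def row_def power2_eq_square)
qed

lemma row_zero: "norm (row i (A::real^'t^'d)) = 0 \<Longrightarrow> A $ i $ t = 0"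
  by (metis norm_eq_zero row_def vec_lambda_beta zero_index)

lemma inner_Diag: "a \<bullet> (Diag c *v a) = (\<Sum>i\<in>UNIV. c i * (a $ i)^2)"
  by (simp add: inner_vec_def Diag_mv power2_eq_square mult_ac)

lemma pinv_term:
  fixes U D :: "real^'d^'d" and W :: "real^'t^'d"
  assumes U: "orthogonal_matrix U" and D: "D = U ** Diag c ** transpose U"
  shows "(\<Sum>t\<in>UNIV. column t W \<bullet> (pinv D *v column t W)) =
         (\<Sum>i\<in>UNIV. inverse (c i) * (norm (row i (transpose U ** W)))^2)"
proof -
  define A where "A = transpose U ** W"
  have W: "W = U ** A" unfolding A_def using orth_UUt[OF U] by (simp add: matrix_mul_assoc)
  have "column t W \<bullet> (pinv D *v column t W) = (\<Sum>i\<in>UNIV. inverse (c i) * (A $ i $ t)^2)" for t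
  proof -
    have "column t W \<bullet> (pinv D *v column t W) = (U *v column t A) \<bullet> (U *v (Diag (\<lambda>i. inverse (c i)) *v column t A))"
      unfolding W column_mul D pinv_diag[OF U] conj_mv2[OF U] ..
    also have "\<dots> = column t A \<bullet> (Diag (\<lambda>i. inverse (c i)) *v column t A)" by (rule orth_inner2[OF U])
    finally show ?thesis by (simp add: inner_Diag column_def)
  qed
  hence "(\<Sum>t\<in>UNIV. column t W \<bullet> (pinv D *v column t W)) = (\<Sum>t\<in>UNIV. \<Sum>i\<in>UNIV. inverse (c i) * (A $ i $ t)^2)"
    by simp
  also have "\<dots> = (\<Sum>i\<in>UNIV. inverse (c i) * (\<Sum>t\<in>UNIV. (A $ i $ t)^2))"
    by (subst sum.swap) (simp add: sum_distrib_left)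
  finally show ?thesis by (simp add: norm_row_sq A_def)
qed

lemma range_zero:
  fixes U D :: "real^'d^'d" and W :: "real^'t^'d"
  assumes U: "orthogonal_matrix U" and D: "D = U ** Diag c ** transpose U"
    and R: "mrange W \<subseteq> mrange D" and c: "c i = 0"
  shows "(transpose U ** W) $ i $ t = 0"
proof -
  have "column t W \<in> mrange W" unfolding mrange_def by (metis (mono_tags) matrix_vector_mult_basis mem_Collect_eq)
  with R obtain z where z: "column t W = D *v z" unfolding mrange_def by blast
  have "(transpose U ** W) $ i $ t = (column t (transpose U ** W)) $ i" by (simp add: column_def)
  also have "\<dots> = (Diag c *v (transpose U *v z)) $ i" unfolding column_mul z D conj_mv[OF U] ..
  also have "\<dots> = 0" using c by (simp add: Diag_mv)
  finally show ?thesis .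
qed

lemma real_ineq:
  fixes r c :: "'i::finite \<Rightarrow> real"
  assumes r: "\<And>i. r i \<ge> 0" and c: "\<And>i. c i \<ge> 0" and sc: "sum c UNIV \<le> 1"
    and z: "\<And>i. c i = 0 \<Longrightarrow> r i = 0"
  shows "(sum r UNIV)^2 \<le> (\<Sum>i\<in>UNIV. inverse (c i) * (r i)^2)"
proof -
  define S where "S = sum r UNIV"
  have S0: "S \<ge> 0" unfolding S_def using r by (simp add: sum_nonneg)
  have pt: "2 * r i * S - c i * S^2 \<le> inverse (c i) * (r i)^2" for i
  proof (cases "c i = 0")
    case True then show ?thesis using z by simp
  next
    case False
    hence cp: "c i > 0" using c[of i] by simp
    have "0 \<le> (r i - c i * S)^2 / c i" using cp by simp
    also have "\<dots> = inverse (c i) * (r i)^2 - 2 * r i * S + c i * S^2"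
      using cp by (simp add: field_simps power2_eq_square)
    finally show ?thesis by simp
  qed
  have "(\<Sum>i\<in>UNIV. 2 * r i * S - c i * S^2) \<le> (\<Sum>i\<in>UNIV. inverse (c i) * (r i)^2)"
    by (rule sum_mono) (rule pt)
  moreover have "(\<Sum>i\<in>UNIV. 2 * r i * S - c i * S^2) = 2 * S * S - sum c UNIV * S^2"
    by (simp add: sum_subtractf sum_distrib_right[symmetric] S_def mult_ac)
  moreover have "sum c UNIV * S^2 \<le> S^2" using sc mult_right_mono[OF sc, of "S^2"] by simp
  ultimately show ?thesis unfolding S_def[symmetric] by (simp add: power2_eq_square)
qed



lemma loss_eq:
  assumes U: "orthogonal_matrix (U::real^'d^'d)"
  shows "(column t (transpose U ** W) + transpose U *v w0) \<bullet> (transpose U *v x) = (column t W + w0) \<bullet> x"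
  unfolding column_mul matrix_vector_right_distrib[symmetric] by (rule orth_inner[OF U])

lemma LB:
  fixes W :: "real^'t::finite^'d::finite" and U D :: "real^'d^'d"
  assumes F: "(W, w0, D) \<in> feasC" and U: "orthogonal_matrix U" and D: "D = U ** Diag c ** transpose U"
    and c: "\<And>i. c i \<ge> 0" and g: "\<gamma> \<ge> 0"
  shows "objP l \<gamma> \<beta> m x y (transpose U ** W) (transpose U *v w0) U \<le> objC l \<gamma> \<beta> m x y (W, w0, D)"
proof -
  define A where "A = transpose U ** W"
  have tr: "trace D \<le> 1" and R: "mrange W \<subseteq> mrange D" using F by (auto simp: feasC_def)
  have sc: "sum c UNIV \<le> 1" using tr trace_conj[OF U] D by simp
  have z: "norm (row i A) = 0" if "c i = 0" for i
  proof -
    have "row i A = 0" using range_zero[OF U D R that] by (simp add: A_def vec_eq_iff row_def)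
    thus ?thesis by simp
  qed
  have "(norm21 A)^2 \<le> (\<Sum>i\<in>UNIV. inverse (c i) * (norm (row i A))^2)"
    unfolding norm21_def by (rule real_ineq) (use c sc z in auto)
  also have "\<dots> = (\<Sum>t\<in>UNIV. column t W \<bullet> (pinv D *v column t W))"
    using pinv_term[OF U D, of W] by (simp add: A_def)
  finally have key: "(norm21 A)^2 \<le> (\<Sum>t\<in>UNIV. column t W \<bullet> (pinv D *v column t W))" .
  have n0: "(norm (transpose U *v w0))^2 = w0 \<bullet> w0"
    unfolding power2_norm_eq_inner orth_inner[OF U] ..
  have "\<gamma> / real CARD('t) * (norm21 A)^2 \<le> \<gamma> / real CARD('t) * (\<Sum>t\<in>UNIV. column t W \<bullet> (pinv D *v column t W))"
    using key g by (intro mult_left_mono) auto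
  moreover have "objP l \<gamma> \<beta> m x y (transpose U ** W) (transpose U *v w0) U =
     (\<Sum>t\<in>UNIV. \<Sum>i<m t. l (y t i) ((column t W + w0) \<bullet> x t i)) + \<gamma> / real CARD('t) * (norm21 A)^2 + \<beta> * (w0 \<bullet> w0)"
    unfolding objP_def loss_eq[OF U] n0 A_def ..
  ultimately show ?thesis unfolding objC_def by simp
qed

lemma conj_left:
  assumes U: "orthogonal_matrix (U::real^'n^'n)"
  shows "(U ** B ** transpose U) ** (U ** M) = U ** (B ** M)"
proof -
  have "(U ** B ** transpose U) ** (U ** M) = U ** B ** (transpose U ** U) ** M" by (simp only: matrix_mul_assoc)
  thus ?thesis using orth_UtU[OF U] by (simp add: matrix_mul_assoc)
qed

lemma EQ:
  fixes A :: "real^'t::finite^'d::finite" and U :: "real^'d^'d"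
  assumes U: "orthogonal_matrix U"
  defines "D \<equiv> U ** Diag (\<lambda>i. norm (row i A) / norm21 A) ** transpose U"
  shows "(U ** A, U *v a0, D) \<in> feasC \<and> objC l \<gamma> \<beta> m x y (U ** A, U *v a0, D) = objP l \<gamma> \<beta> m x y A a0 U"
proof -
  define N where "N = norm21 A"
  define r where "r i = norm (row i A)" for i
  define mu where "mu i = r i / N" for i
  have D': "D = U ** Diag mu ** transpose U" unfolding D_def mu_def r_def N_def ..
  have r0: "r i \<ge> 0" for i by (simp add: r_def)
  have NS: "N = sum r UNIV" by (simp add: N_def r_def norm21_def)
  have N0: "N \<ge> 0" unfolding NS using r0 by (simp add: sum_nonneg)
  have mu0: "mu i \<ge> 0" for i using r0 N0 by (simp add: mu_def)
  have rz: "r i = 0" if "mu i = 0" for i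
  proof (cases "N = 0")
    case True
    thus ?thesis using NS r0 sum_nonneg_eq_0_iff[of UNIV r] by simp
  next
    case False thus ?thesis using that by (simp add: mu_def)
  qed
  have UtUA: "transpose U ** (U ** A) = A" using orth_UtU[OF U] by (simp add: matrix_mul_assoc)
  have "trace D = sum mu UNIV" unfolding D' by (rule trace_conj[OF U])
  also have "\<dots> = sum r UNIV / N" by (simp add: mu_def sum_divide_distrib)
  also have "\<dots> \<le> 1" unfolding NS[symmetric] by (cases "N = 0") auto
  finally have tr: "trace D \<le> 1" .
  have sym: "transpose D = D" unfolding D' conj_transpose transpose_Diag ..
  have "0 \<le> v \<bullet> (D *v v)" for v
  proof -
    have "D *v v = U *v (Diag mu *v (transpose U *v v))"
      by (simp only: D' matrix_vector_mul_assoc matrix_mul_assoc)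
    hence "v \<bullet> (D *v v) = (transpose U *v v) \<bullet> (Diag mu *v (transpose U *v v))"
      using inner_mv[of "transpose U" v] by simp
    also have "\<dots> \<ge> 0" unfolding inner_Diag using mu0 by (simp add: sum_nonneg)
    finally show ?thesis .
  qed
  hence psd: "psd D" using sym by (simp add: psd_def)
  have "Diag (\<lambda>i. mu i * inverse (mu i)) ** A = A"
  proof -
    have "mu i * inverse (mu i) * A $ i $ t = A $ i $ t" for i t
    proof (cases "mu i = 0")
      case True thus ?thesis using rz[OF True] row_zero[of i A t] by (simp add: r_def)
    qed simp
    thus ?thesis by (simp add: vec_eq_iff Diag_mul_nth)
  qed
  hence DZ: "D ** (U ** (Diag (\<lambda>i. inverse (mu i)) ** A)) = U ** A"
    unfolding D' conj_left[OF U] by (simp add: matrix_mul_assoc Diag_mul)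
  have "mrange (U ** A) \<subseteq> mrange D"
  proof
    fix w assume "w \<in> mrange (U ** A)"
    then obtain z where "w = (U ** A) *v z" unfolding mrange_def by blast
    hence "w = D *v ((U ** (Diag (\<lambda>i. inverse (mu i)) ** A)) *v z)"
      unfolding DZ[symmetric] matrix_vector_mul_assoc .
    thus "w \<in> mrange D" unfolding mrange_def by blast
  qed
  hence F: "(U ** A, U *v a0, D) \<in> feasC" using tr psd by (simp add: feasC_def)
  have "(\<Sum>t\<in>UNIV. column t (U ** A) \<bullet> (pinv D *v column t (U ** A))) = (\<Sum>i\<in>UNIV. inverse (mu i) * (r i)^2)"
    using pinv_term[OF U D', of "U ** A"] by (simp add: UtUA r_def)
  also have "\<dots> = (\<Sum>i\<in>UNIV. N * r i)"
  proof (rule sum.cong)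
    fix i
    show "inverse (mu i) * (r i)^2 = N * r i"
      by (cases "N = 0"; cases "r i = 0") (auto simp: mu_def power2_eq_square field_simps)
  qed simp
  also have "\<dots> = N^2" by (simp add: NS sum_distrib_left power2_eq_square)
  finally have pt: "(\<Sum>t\<in>UNIV. column t (U ** A) \<bullet> (pinv D *v column t (U ** A))) = (norm21 A)^2"
    by (simp add: N_def)
  have lo: "(column t (U ** A) + U *v a0) \<bullet> x' = (column t A + a0) \<bullet> (transpose U *v x')" for t x'
    unfolding column_mul matrix_vector_right_distrib[symmetric] inner_mv ..
  have n0: "(U *v a0) \<bullet> (U *v a0) = (norm a0)^2" unfolding orth_inner2[OF U] by (simp add: power2_norm_eq_inner)
  show ?thesis using F unfolding objC_def objP_def by (simp only: prod.case pt lo n0)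
qed



lemma trace_lin: "trace (u *\<^sub>R (D1::real^'n^'n) + v *\<^sub>R D2) = u * trace D1 + v * trace D2"
  by (simp add: trace_def sum.distrib sum_distrib_left)

lemma mv_lin: "(u *\<^sub>R (D1::real^'n^'m) + v *\<^sub>R D2) *v z = u *\<^sub>R (D1 *v z) + v *\<^sub>R (D2 *v z)"
  by (simp add: vec_eq_iff matrix_vector_mult_def sum.distrib sum_distrib_left algebra_simps)

lemma transpose_lin: "transpose (u *\<^sub>R (D1::real^'n^'n) + v *\<^sub>R D2) = u *\<^sub>R transpose D1 + v *\<^sub>R transpose D2"
  by (simp add: vec_eq_iff transpose_def)

lemma column_lin: "column t (u *\<^sub>R (W1::real^'t^'n) + v *\<^sub>R W2) = u *\<^sub>R column t W1 + v *\<^sub>R column t W2"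
  by (simp add: vec_eq_iff column_def)

lemma feas_comb:
  fixes W1 W2 :: "real^'t^'d" and D1 D2 :: "real^'d^'d"
  assumes F1: "(W1, w1, D1) \<in> feasC" and F2: "(W2, w2, D2) \<in> feasC"
    and u: "u \<ge> 0" and v: "v \<ge> 0" and uv: "u + v = 1"
  shows "(u *\<^sub>R W1 + v *\<^sub>R W2, u *\<^sub>R w1 + v *\<^sub>R w2, u *\<^sub>R D1 + v *\<^sub>R D2) \<in> feasC"
proof -
  define D where "D = u *\<^sub>R D1 + v *\<^sub>R D2"
  have t1: "trace D1 \<le> 1" and R1: "mrange W1 \<subseteq> mrange D1" and p1: "psd D1" using F1 by (auto simp: feasC_def)
  have t2: "trace D2 \<le> 1" and R2: "mrange W2 \<subseteq> mrange D2" and p2: "psd D2" using F2 by (auto simp: feasC_def)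
  have "trace D = u * trace D1 + v * trace D2" unfolding D_def by (rule trace_lin)
  also have "\<dots> \<le> u * 1 + v * 1" using t1 t2 u v by (intro add_mono mult_left_mono) auto
  finally have tr: "trace D \<le> 1" using uv by simp
  have s1: "transpose D1 = D1" using p1 by (simp add: psd_def)
  have s2: "transpose D2 = D2" using p2 by (simp add: psd_def)
  have q: "w \<bullet> (D *v w) = u * (w \<bullet> (D1 *v w)) + v * (w \<bullet> (D2 *v w))" for w
    unfolding D_def mv_lin by (simp add: inner_add_right)
  have psd: "psd D" unfolding psd_def
  proof
    show "transpose D = D" unfolding D_def transpose_lin s1 s2 ..
    show "\<forall>w. 0 \<le> w \<bullet> (D *v w)" using q u v psd_nonneg[OF p1] psd_nonneg[OF p2] by simp
  qed
  have "mrange (u *\<^sub>R W1 + v *\<^sub>R W2) \<subseteq> mrange D"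
  proof
    fix w assume "w \<in> mrange (u *\<^sub>R W1 + v *\<^sub>R W2)"
    then obtain z where wz: "w = (u *\<^sub>R W1 + v *\<^sub>R W2) *v z" unfolding mrange_def by blast
    have "W1 *v z \<in> mrange D1" using R1 unfolding mrange_def by blast
    then obtain z1 where z1: "W1 *v z = D1 *v z1" unfolding mrange_def by blast
    have "W2 *v z \<in> mrange D2" using R2 unfolding mrange_def by blast
    then obtain z2 where z2: "W2 *v z = D2 *v z2" unfolding mrange_def by blast
    show "w \<in> mrange D"
    proof (rule range_char[OF psd])
      fix a assume "D *v a = 0"
      hence "u * (a \<bullet> (D1 *v a)) + v * (a \<bullet> (D2 *v a)) = 0" using q[of a] by simp
      moreover have "u * (a \<bullet> (D1 *v a)) \<ge> 0" "v * (a \<bullet> (D2 *v a)) \<ge> 0"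
        using u v psd_nonneg[OF p1] psd_nonneg[OF p2] by auto
      ultimately have "u * (a \<bullet> (D1 *v a)) = 0" "v * (a \<bullet> (D2 *v a)) = 0" by linarith+
      hence "u = 0 \<or> D1 *v a = 0" "v = 0 \<or> D2 *v a = 0" using psd_null[OF p1] psd_null[OF p2] by auto
      hence "u * ((D1 *v a) \<bullet> z1) = 0" "v * ((D2 *v a) \<bullet> z2) = 0" by auto
      moreover have "a \<bullet> w = u * ((D1 *v a) \<bullet> z1) + v * ((D2 *v a) \<bullet> z2)"
        unfolding wz mv_lin z1 z2 inner_add_right inner_scaleR_right
        using sym_inner[OF s1, of a z1] sym_inner[OF s2, of a z2] by simp
      ultimately show "a \<bullet> w = 0" by (metis add.right_neutral)
    qed
  qed
  thus ?thesis using tr psd unfolding feasC_def D_def by simp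
qed

lemma convex_feasC: "convex (feasC :: ((real^'t^'d) \<times> (real^'d) \<times> (real^'d^'d)) set)"
  unfolding convex_def
proof (intro ballI allI impI)
  fix p q :: "(real^'t^'d) \<times> (real^'d) \<times> (real^'d^'d)" and u v :: real
  assume "p \<in> feasC" "q \<in> feasC" "0 \<le> u" "0 \<le> v" "u + v = 1"
  thus "u *\<^sub>R p + v *\<^sub>R q \<in> feasC"
    using feas_comb[of "fst p" "fst (snd p)" "snd (snd p)" "fst q" "fst (snd q)" "snd (snd q)" u v]
    by (cases p; cases q) simp
qed



lemma col_mrange: "column t (W::real^'t^'d) \<in> mrange W"
  unfolding mrange_def by (metis (mono_tags) matrix_vector_mult_basis mem_Collect_eq)

lemma pinv_comb:
  fixes D1 D2 :: "real^'d^'d"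
  assumes p1: "psd D1" and p2: "psd D2" and r1: "c1 \<in> mrange D1" and r2: "c2 \<in> mrange D2"
    and r: "u *\<^sub>R c1 + v *\<^sub>R c2 \<in> mrange (u *\<^sub>R D1 + v *\<^sub>R D2)"
    and p: "psd (u *\<^sub>R D1 + v *\<^sub>R D2)" and u: "u \<ge> 0" and v: "v \<ge> 0"
  shows "(u *\<^sub>R c1 + v *\<^sub>R c2) \<bullet> (pinv (u *\<^sub>R D1 + v *\<^sub>R D2) *v (u *\<^sub>R c1 + v *\<^sub>R c2))
     \<le> u * (c1 \<bullet> (pinv D1 *v c1)) + v * (c2 \<bullet> (pinv D2 *v c2))"
proof -
  define D where "D = u *\<^sub>R D1 + v *\<^sub>R D2"
  define w where "w = u *\<^sub>R c1 + v *\<^sub>R c2"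
  obtain z where z: "w = D *v z" using r unfolding mrange_def D_def w_def by blast
  obtain z1 where z1: "c1 = D1 *v z1" using r1 unfolding mrange_def by blast
  obtain z2 where z2: "c2 = D2 *v z2" using r2 unfolding mrange_def by blast
  have pD: "psd D" using p by (simp add: D_def)
  have "w \<bullet> (pinv D *v w) = z \<bullet> (D *v z)" by (rule pinv_quad[OF pD z])
  also have "\<dots> = 2 * (z \<bullet> w) - z \<bullet> (D *v z)" using z by simp
  also have "\<dots> = u * (2 * (z \<bullet> c1) - z \<bullet> (D1 *v z)) + v * (2 * (z \<bullet> c2) - z \<bullet> (D2 *v z))"
    unfolding w_def D_def mv_lin by (simp add: inner_add_right algebra_simps)
  also have "\<dots> \<le> u * (c1 \<bullet> (pinv D1 *v c1)) + v * (c2 \<bullet> (pinv D2 *v c2))"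
    using pinv_sup[OF p1 z1, of z] pinv_sup[OF p2 z2, of z] u v
    by (intro add_mono mult_left_mono) auto
  finally show ?thesis unfolding w_def D_def .
qed

lemma sq_comb:
  fixes w1 w2 :: "real^'d"
  assumes u: "u \<ge> 0" and v: "v \<ge> 0" and uv: "u + v = 1"
  shows "(u *\<^sub>R w1 + v *\<^sub>R w2) \<bullet> (u *\<^sub>R w1 + v *\<^sub>R w2) \<le> u * (w1 \<bullet> w1) + v * (w2 \<bullet> w2)"
proof -
  have e: "u * (w1 \<bullet> w1) + v * (w2 \<bullet> w2) - (u *\<^sub>R w1 + v *\<^sub>R w2) \<bullet> (u *\<^sub>R w1 + v *\<^sub>R w2)
      = u * v * ((w1 - w2) \<bullet> (w1 - w2))"
  proof -
    have v': "v = 1 - u" using uv by simp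
    show ?thesis unfolding v'
      by (simp add: inner_add_left inner_add_right inner_diff_left inner_diff_right inner_commute[of w2 w1] algebra_simps power2_eq_square)
  qed
  have "0 \<le> u * v * ((w1 - w2) \<bullet> (w1 - w2))" using u v by simp
  thus ?thesis using e by linarith
qed

lemma objC_comb:
  fixes W1 W2 :: "real^'t::finite^'d::finite" and D1 D2 :: "real^'d^'d"
  assumes F1: "(W1, w1, D1) \<in> feasC" and F2: "(W2, w2, D2) \<in> feasC"
    and u: "u \<ge> 0" and v: "v \<ge> 0" and uv: "u + v = 1"
    and g: "\<gamma> \<ge> 0" and b: "\<beta> \<ge> 0" and lc: "\<forall>a. convex_on UNIV (l a)"
  shows "objC l \<gamma> \<beta> m x y (u *\<^sub>R W1 + v *\<^sub>R W2, u *\<^sub>R w1 + v *\<^sub>R w2, u *\<^sub>R D1 + v *\<^sub>R D2)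
    \<le> u * objC l \<gamma> \<beta> m x y (W1, w1, D1) + v * objC l \<gamma> \<beta> m x y (W2, w2, D2)"
proof -
  have F: "(u *\<^sub>R W1 + v *\<^sub>R W2, u *\<^sub>R w1 + v *\<^sub>R w2, u *\<^sub>R D1 + v *\<^sub>R D2) \<in> feasC"
    by (rule feas_comb[OF F1 F2 u v uv])
  have R1: "mrange W1 \<subseteq> mrange D1" and p1: "psd D1" using F1 by (auto simp: feasC_def)
  have R2: "mrange W2 \<subseteq> mrange D2" and p2: "psd D2" using F2 by (auto simp: feasC_def)
  have R: "mrange (u *\<^sub>R W1 + v *\<^sub>R W2) \<subseteq> mrange (u *\<^sub>R D1 + v *\<^sub>R D2)"
    and p: "psd (u *\<^sub>R D1 + v *\<^sub>R D2)" using F by (auto simp: feasC_def)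
  have L: "l (y t i) ((column t (u *\<^sub>R W1 + v *\<^sub>R W2) + (u *\<^sub>R w1 + v *\<^sub>R w2)) \<bullet> x t i)
      \<le> u * l (y t i) ((column t W1 + w1) \<bullet> x t i) + v * l (y t i) ((column t W2 + w2) \<bullet> x t i)" for t i
  proof -
    have "(column t (u *\<^sub>R W1 + v *\<^sub>R W2) + (u *\<^sub>R w1 + v *\<^sub>R w2)) \<bullet> x t i
        = u *\<^sub>R ((column t W1 + w1) \<bullet> x t i) + v *\<^sub>R ((column t W2 + w2) \<bullet> x t i)"
      unfolding column_lin by (simp add: inner_add_left algebra_simps)
    moreover have "convex_on UNIV (l (y t i))" using lc by blast
    ultimately show ?thesis using u v uv unfolding convex_on_def by simp
  qed
  have L': "(\<Sum>t\<in>UNIV. \<Sum>i<m t. l (y t i) ((column t (u *\<^sub>R W1 + v *\<^sub>R W2) + (u *\<^sub>R w1 + v *\<^sub>R w2)) \<bullet> x t i))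
     \<le> u * (\<Sum>t\<in>UNIV. \<Sum>i<m t. l (y t i) ((column t W1 + w1) \<bullet> x t i)) + v * (\<Sum>t\<in>UNIV. \<Sum>i<m t. l (y t i) ((column t W2 + w2) \<bullet> x t i))"
  proof -
    have "(\<Sum>t\<in>UNIV. \<Sum>i<m t. l (y t i) ((column t (u *\<^sub>R W1 + v *\<^sub>R W2) + (u *\<^sub>R w1 + v *\<^sub>R w2)) \<bullet> x t i))
      \<le> (\<Sum>t\<in>UNIV. \<Sum>i<m t. u * l (y t i) ((column t W1 + w1) \<bullet> x t i) + v * l (y t i) ((column t W2 + w2) \<bullet> x t i))"
      by (intro sum_mono L)
    thus ?thesis by (simp add: sum.distrib sum_distrib_left)
  qed
  have P: "(\<Sum>t\<in>UNIV. column t (u *\<^sub>R W1 + v *\<^sub>R W2) \<bullet> (pinv (u *\<^sub>R D1 + v *\<^sub>R D2) *v column t (u *\<^sub>R W1 + v *\<^sub>R W2)))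
     \<le> u * (\<Sum>t\<in>UNIV. column t W1 \<bullet> (pinv D1 *v column t W1)) + v * (\<Sum>t\<in>UNIV. column t W2 \<bullet> (pinv D2 *v column t W2))"
  proof -
    have "(\<Sum>t\<in>UNIV. column t (u *\<^sub>R W1 + v *\<^sub>R W2) \<bullet> (pinv (u *\<^sub>R D1 + v *\<^sub>R D2) *v column t (u *\<^sub>R W1 + v *\<^sub>R W2)))
      \<le> (\<Sum>t\<in>UNIV. u * (column t W1 \<bullet> (pinv D1 *v column t W1)) + v * (column t W2 \<bullet> (pinv D2 *v column t W2)))"
    proof (rule sum_mono)
      fix t
      have r: "u *\<^sub>R column t W1 + v *\<^sub>R column t W2 \<in> mrange (u *\<^sub>R D1 + v *\<^sub>R D2)"
        using R col_mrange[of t "u *\<^sub>R W1 + v *\<^sub>R W2"] unfolding column_lin by blast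
      show "column t (u *\<^sub>R W1 + v *\<^sub>R W2) \<bullet> (pinv (u *\<^sub>R D1 + v *\<^sub>R D2) *v column t (u *\<^sub>R W1 + v *\<^sub>R W2))
        \<le> u * (column t W1 \<bullet> (pinv D1 *v column t W1)) + v * (column t W2 \<bullet> (pinv D2 *v column t W2))"
        unfolding column_lin
        by (rule pinv_comb[OF p1 p2 _ _ r p u v]) (use R1 R2 col_mrange in blast)+
    qed
    thus ?thesis by (simp add: sum.distrib sum_distrib_left)
  qed
  have P': "\<gamma> / real CARD('t) * (\<Sum>t\<in>UNIV. column t (u *\<^sub>R W1 + v *\<^sub>R W2) \<bullet> (pinv (u *\<^sub>R D1 + v *\<^sub>R D2) *v column t (u *\<^sub>R W1 + v *\<^sub>R W2)))
     \<le> u * (\<gamma> / real CARD('t) * (\<Sum>t\<in>UNIV. column t W1 \<bullet> (pinv D1 *v column t W1))) + v * (\<gamma> / real CARD('t) * (\<Sum>t\<in>UNIV. column t W2 \<bullet> (pinv D2 *v column t W2)))"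
    using mult_left_mono[OF P, of "\<gamma> / real CARD('t)"] g by (simp add: algebra_simps)
  have B: "\<beta> * ((u *\<^sub>R w1 + v *\<^sub>R w2) \<bullet> (u *\<^sub>R w1 + v *\<^sub>R w2)) \<le> u * (\<beta> * (w1 \<bullet> w1)) + v * (\<beta> * (w2 \<bullet> w2))"
    using mult_left_mono[OF sq_comb[OF u v uv, of w1 w2] b] by (simp add: algebra_simps)
  show ?thesis unfolding objC_def prod.case using L' P' B by (simp add: algebra_simps)
qed

lemma convex_objC:
  assumes g: "\<gamma> \<ge> 0" and b: "\<beta> \<ge> 0" and lc: "\<forall>a. convex_on UNIV (l a)"
  shows "convex_on (feasC :: ((real^'t::finite^'d::finite) \<times> (real^'d) \<times> (real^'d^'d)) set) (objC l \<gamma> \<beta> m x y)"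
  unfolding convex_on_def
proof (intro conjI convex_feasC ballI allI impI)
  fix p q :: "(real^'t^'d) \<times> (real^'d) \<times> (real^'d^'d)" and u v :: real
  assume "p \<in> feasC" "q \<in> feasC" "0 \<le> u" "0 \<le> v" "u + v = 1"
  thus "objC l \<gamma> \<beta> m x y (u *\<^sub>R p + v *\<^sub>R q) \<le> u * objC l \<gamma> \<beta> m x y p + v * objC l \<gamma> \<beta> m x y q"
    using objC_comb[of "fst p" "fst (snd p)" "snd (snd p)" "fst q" "fst (snd q)" "snd (snd q)" u v \<gamma> \<beta> l m x y, OF _ _ _ _ _ g b lc]
    by (cases p; cases q) simp
qed



lemma eig_nonneg:
  assumes "psd D" "orthogonal_matrix U" "D *v column i U = c *s column i U"
  shows "c \<ge> 0"
proof -
  have "0 \<le> column i U \<bullet> (D *v column i U)" by (rule psd_nonneg[OF assms(1)])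
  also have "\<dots> = c * (column i U \<bullet> column i U)" using assms(3) by (simp add: scalar_mult_eq_scaleR)
  also have "\<dots> = c" using assms(2) by (simp add: orthogonal_matrix_orthonormal_columns norm_eq_1)
  finally show ?thesis .
qed

theorem theorem1:
  fixes l :: "real \<Rightarrow> real \<Rightarrow> real" and \<gamma> \<beta> :: real
    and m :: "'t::finite \<Rightarrow> nat"
    and x :: "'t \<Rightarrow> nat \<Rightarrow> real^'d::finite" and y :: "'t \<Rightarrow> nat \<Rightarrow> real"
  assumes "\<gamma> > 0" and "\<beta> > 0"
    and "\<forall>a. convex_on UNIV (l a)"
  shows "(convex (feasC :: ((real^'t^'d) \<times> (real^'d) \<times> (real^'d^'d)) set)
          \<and> convex_on feasC (objC l \<gamma> \<beta> m x y))
     \<and> (\<forall>W w0 D U. optC l \<gamma> \<beta> m x y W w0 D \<and> orthogonal_matrix U \<and>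
           (\<forall>i. \<exists>c. D *v column i U = c *s column i U) \<longrightarrow>
           optP l \<gamma> \<beta> m x y (transpose U ** W) (transpose U *v w0) U)
     \<and> (\<forall>A a0 U. optP l \<gamma> \<beta> m x y A a0 U \<longrightarrow>
           optC l \<gamma> \<beta> m x y (U ** A) (U *v a0)
             (U ** Diag (\<lambda>i. norm (row i A) / norm21 A) ** transpose U))"
proof (intro conjI allI impI)
  have g: "\<gamma> \<ge> 0" and b: "\<beta> \<ge> 0" using assms by auto
  show "convex (feasC :: ((real^'t^'d) \<times> (real^'d) \<times> (real^'d^'d)) set)" by (rule convex_feasC)
  show "convex_on (feasC :: ((real^'t^'d) \<times> (real^'d) \<times> (real^'d^'d)) set) (objC l \<gamma> \<beta> m x y)"
    by (rule convex_objC[OF g b assms(3)])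
next
  fix W :: "real^'t^'d" and w0 D U
  assume h: "optC l \<gamma> \<beta> m x y W w0 D \<and> orthogonal_matrix U \<and> (\<forall>i. \<exists>c. D *v column i U = c *s column i U)"
  have g: "\<gamma> \<ge> 0" using assms by auto
  have oc: "optC l \<gamma> \<beta> m x y W w0 D" and U: "orthogonal_matrix U" using h by auto
  obtain c where c: "\<forall>i. D *v column i U = c i *s column i U" using h by metis
  have F: "(W, w0, D) \<in> feasC" using oc by (simp add: optC_def)
  hence pD: "psd D" by (simp add: feasC_def)
  have c0: "c i \<ge> 0" for i using eig_nonneg[OF pD U] c by blast
  have Dd: "D = U ** Diag c ** transpose U" by (rule eig_decomp[OF U c])
  have lb: "objP l \<gamma> \<beta> m x y (transpose U ** W) (transpose U *v w0) U \<le> objC l \<gamma> \<beta> m x y (W, w0, D)"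
    by (rule LB[OF F U Dd c0 g])
  show "optP l \<gamma> \<beta> m x y (transpose U ** W) (transpose U *v w0) U"
    unfolding optP_def
  proof (intro conjI ballI)
    show "(transpose U ** W, transpose U *v w0, U) \<in> feasP" using U by (simp add: feasP_def)
  next
    fix p assume "p \<in> (feasP :: ((real^'t^'d) \<times> (real^'d) \<times> (real^'d^'d)) set)"
    then obtain A' a0' U' where p: "p = (A', a0', U')" and U': "orthogonal_matrix U'"
      by (auto simp: feasP_def)
    have e: "(U' ** A', U' *v a0', U' ** Diag (\<lambda>i. norm (row i A') / norm21 A') ** transpose U') \<in> feasC \<and>
      objC l \<gamma> \<beta> m x y (U' ** A', U' *v a0', U' ** Diag (\<lambda>i. norm (row i A') / norm21 A') ** transpose U') =
      objP l \<gamma> \<beta> m x y A' a0' U'" by (rule EQ[OF U'])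
    have "objC l \<gamma> \<beta> m x y (W, w0, D) \<le> objP l \<gamma> \<beta> m x y A' a0' U'"
      using oc e unfolding optC_def by metis
    thus "case p of (A', a0', U') \<Rightarrow> objP l \<gamma> \<beta> m x y (transpose U ** W) (transpose U *v w0) U \<le> objP l \<gamma> \<beta> m x y A' a0' U'"
      using lb p by simp
  qed
next
  fix A :: "real^'t^'d" and a0 U
  assume op: "optP l \<gamma> \<beta> m x y A a0 U"
  have g: "\<gamma> \<ge> 0" using assms by auto
  have U: "orthogonal_matrix U" using op by (simp add: optP_def feasP_def)
  note e = EQ[OF U, of A a0 l \<gamma> \<beta> m x y]
  show "optC l \<gamma> \<beta> m x y (U ** A) (U *v a0) (U ** Diag (\<lambda>i. norm (row i A) / norm21 A) ** transpose U)"
    unfolding optC_def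
  proof (intro conjI ballI)
    show "(U ** A, U *v a0, U ** Diag (\<lambda>i. norm (row i A) / norm21 A) ** transpose U) \<in> feasC" using e by blast
  next
    fix p assume pF: "p \<in> (feasC :: ((real^'t^'d) \<times> (real^'d) \<times> (real^'d^'d)) set)"
    obtain W' w0' D' where p: "p = (W', w0', D')" by (cases p) auto
    have F': "(W', w0', D') \<in> feasC" using pF p by simp
    hence "psd D'" by (simp add: feasC_def)
    then obtain U' c where U': "orthogonal_matrix U'" and D': "D' = U' ** Diag c ** transpose U'"
      and c0: "\<forall>i. c i \<ge> 0" using psd_spec by blast
    have lb: "objP l \<gamma> \<beta> m x y (transpose U' ** W') (transpose U' *v w0') U' \<le> objC l \<gamma> \<beta> m x y (W', w0', D')"
      by (rule LB[OF F' U' D' _ g]) (use c0 in blast)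
    have "objP l \<gamma> \<beta> m x y A a0 U \<le> objP l \<gamma> \<beta> m x y (transpose U' ** W') (transpose U' *v w0') U'"
      using op U' unfolding optP_def feasP_def by fastforce
    thus "objC l \<gamma> \<beta> m x y (U ** A, U *v a0, U ** Diag (\<lambda>i. norm (row i A) / norm21 A) ** transpose U)
      \<le> objC l \<gamma> \<beta> m x y p" using e lb p by simp
  qed
qed

end
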